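(* Let $k$ be a finite field and, for $j\ge0$, let $c_j$ denote the number of conjugacy classes of $GL_j(k)$ (with $GL_0(k)$ the trivial group, so $c_0=1$). Then the number of conjugacy classes of $AGL_n(k)$ equals $c_n + c_{n-1} + \dots + c_0$.
   Context: $AGL_n(k)$ is the affine general linear group, the semidirect product of $GL_n(k)$ with the row space $(k^n)^t$, realized as the matrices $\begin{pmatrix}1 & u\\ 0 & A\end{pmatrix}$ with $u\in (k^n)^t$ and $A\in GL_n(k)$. *)

theory Defs
  imports "Jordan_Normal_Form.Matrix" "HOL-Algebra.Group"
begin

definition GL_group :: "nat \<Rightarrow> 'a::field mat monoid" where
  "GL_group n = \<lparr> carrier = {A \<in> carrier_mat n n. invertible_mat A},
                  mult = (\<lambda>A B. A * B), one = 1\<^sub>m n \<rparr>"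

definition AGL_group :: "nat \<Rightarrow> 'a::field mat monoid" where
  "AGL_group n = \<lparr> carrier = {four_block_mat (1\<^sub>m 1) u (0\<^sub>m n 1) A | u A.
                                 u \<in> carrier_mat 1 n \<and> A \<in> carrier (GL_group n)},
                   mult = (\<lambda>A B. A * B), one = 1\<^sub>m (Suc n) \<rparr>"

definition conj_classes :: "('g, 'b) monoid_scheme \<Rightarrow> 'g set set" where
  "conj_classes G = (\<lambda>x. {g \<otimes>\<^bsub>G\<^esub> x \<otimes>\<^bsub>G\<^esub> inv\<^bsub>G\<^esub> g | g. g \<in> carrier G}) ` carrier G"

end

theory Submission
  imports Defs "Jordan_Normal_Form.Determinant" "HOL-Algebra.Group_Action"
begin
lemma vec_of_list_carrier: "length xs = n \<Longrightarrow> vec_of_list xs \<in> carrier_vec n"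
  by (metis carrier_vec_def dim_vec_of_list mem_Collect_eq)

lemma carrier_vec_lists: "carrier_vec n = vec_of_list ` {xs. set xs \<subseteq> UNIV \<and> length xs = n}"
proof (intro equalityI subsetI)
  fix v :: "'a vec" assume "v \<in> carrier_vec n"
  then have "length (list_of_vec v) = n" by simp
  then show "v \<in> vec_of_list ` {xs. set xs \<subseteq> UNIV \<and> length xs = n}"
    by (intro image_eqI[of _ _ "list_of_vec v"]) (simp_all add: vec_list)
next
  fix v :: "'a vec" assume "v \<in> vec_of_list ` {xs. set xs \<subseteq> UNIV \<and> length xs = n}"
  then obtain xs where "v = vec_of_list xs" "xs \<in> {xs. set xs \<subseteq> UNIV \<and> length xs = n}" by (rule imageE)
  then show "v \<in> carrier_vec n" using vec_of_list_carrier by blast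
qed

lemma finite_carrier_vec[simp]: "finite (carrier_vec n :: 'a::finite vec set)"
proof -
  have "finite {xs::'a list. set xs \<subseteq> UNIV \<and> length xs = n}" by (rule finite_lists_length_eq) simp
  then show ?thesis unfolding carrier_vec_lists by (rule finite_imageI)
qed

lemma card_carrier_vec: "card (carrier_vec n :: 'a::finite vec set) = card (UNIV :: 'a set) ^ n"
proof -
  have inj: "inj_on (vec_of_list :: 'a list \<Rightarrow> _) {xs::'a list. set xs \<subseteq> UNIV \<and> length xs = n}"
    by (intro inj_onI) (metis list_vec)
  have "card (carrier_vec n :: 'a vec set) = card {xs::'a list. set xs \<subseteq> UNIV \<and> length xs = n}"
    unfolding carrier_vec_lists by (rule card_image[OF inj])
  also have "\<dots> = card (UNIV::'a set)^n"
    by (rule card_lists_length_eq) simp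
  finally show ?thesis .
qed

lemma card_fibers:
  assumes "finite A" "finite T" "f ` A \<subseteq> T"
  shows "card A = (\<Sum>t\<in>T. card {x\<in>A. f x = t})"
proof -
  have "card A = card ((\<lambda>x. (f x, x)) ` A)" by (rule card_image[symmetric]) (auto intro: inj_onI)
  also have "(\<lambda>x. (f x, x)) ` A = Sigma T (\<lambda>t. {x\<in>A. f x = t})" using assms(3) by auto
  also have "card \<dots> = (\<Sum>t\<in>T. card {x\<in>A. f x = t})" using assms by (intro card_SigmaI) auto
  finally show ?thesis .
qed

lemma fiber_le:
  fixes c :: "'a::{finite,field} vec"
  assumes c: "c \<in> carrier_vec n" and i: "i < n" "c $ i \<noteq> 0"
  shows "card {y \<in> carrier_vec n. c \<bullet> y = t} \<le> card {y \<in> carrier_vec n. c \<bullet> y = s}"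
proof -
  define a where "a = (s - t) / c $ i"
  define f where "f = (\<lambda>y. y + a \<cdot>\<^sub>v unit_vec n i)"
  have "inj_on f {y \<in> carrier_vec n. c \<bullet> y = t}"
  proof (rule inj_onI)
    fix x y assume "x \<in> {y \<in> carrier_vec n. c \<bullet> y = t}" "y \<in> {y \<in> carrier_vec n. c \<bullet> y = t}" "f x = f y"
    then have x: "x \<in> carrier_vec n" and y: "y \<in> carrier_vec n" and fxy: "f x = f y" by auto
    show "x = y"
    proof (rule eq_vecI)
      fix j assume "j < dim_vec y"
      then have j: "j < n" using y by simp
      have "f x $ j = f y $ j" using fxy by simp
      then show "x $ j = y $ j" using x y j unfolding f_def by simp
    qed (use x y in simp)
  qed
  moreover have "f ` {y \<in> carrier_vec n. c \<bullet> y = t} \<subseteq> {y \<in> carrier_vec n. c \<bullet> y = s}"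
  proof
    fix z assume "z \<in> f ` {y \<in> carrier_vec n. c \<bullet> y = t}"
    then obtain y where y: "y \<in> carrier_vec n" "c \<bullet> y = t" and z: "z = f y" by blast
    have "c \<bullet> z = c \<bullet> y + c \<bullet> (a \<cdot>\<^sub>v unit_vec n i)"
      unfolding z f_def by (rule scalar_prod_add_distrib[OF c y(1)]) simp
    also have "\<dots> = t + a * c $ i" using y c i by simp
    also have "\<dots> = s" using i unfolding a_def by simp
    finally show "z \<in> {y \<in> carrier_vec n. c \<bullet> y = s}" using y unfolding z f_def by simp
  qed
  ultimately show ?thesis by (intro card_inj_on_le) auto
qed

lemma functional_count:
  fixes c :: "'a::{finite,field} vec"
  assumes c: "c \<in> carrier_vec n" "c \<noteq> 0\<^sub>v n"
  shows "card (UNIV::'a set) * card {y \<in> carrier_vec n. c \<bullet> y = t} = card (UNIV::'a set) ^ n"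
proof -
  have "\<exists>i<n. c $ i \<noteq> 0"
  proof (rule ccontr)
    assume "\<not> (\<exists>i<n. c $ i \<noteq> 0)"
    then have "c = 0\<^sub>v n" using c(1) by (intro eq_vecI) auto
    then show False using c(2) by simp
  qed
  then obtain i where i: "i < n" "c $ i \<noteq> 0" by blast
  have eq: "card {y \<in> carrier_vec n. c \<bullet> y = s} = card {y \<in> carrier_vec n. c \<bullet> y = t}" for s
    using fiber_le[OF c(1) i, of s t] fiber_le[OF c(1) i, of t s] by simp
  have "card (carrier_vec n :: 'a vec set) = (\<Sum>s\<in>UNIV. card {y \<in> carrier_vec n. c \<bullet> y = s})"
    by (rule card_fibers) auto
  also have "\<dots> = (\<Sum>s\<in>(UNIV::'a set). card {y \<in> carrier_vec n. c \<bullet> y = t})" apply (rule sum.cong) apply (rule refl) apply (rule eq) done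
  also have "\<dots> = card (UNIV::'a set) * card {y \<in> carrier_vec n. c \<bullet> y = t}" by simp
  finally show ?thesis using card_carrier_vec by metis
qed

lemma vec_minus_eq_0_iff:
  fixes x y :: "'a::ab_group_add vec"
  assumes "x \<in> carrier_vec n" "y \<in> carrier_vec n"
  shows "(x - y = 0\<^sub>v n) = (x = y)"
proof
  assume h: "x - y = 0\<^sub>v n"
  show "x = y"
  proof (rule eq_vecI)
    fix i assume "i < dim_vec y"
    then have i: "i < n" using assms by simp
    have "(x - y) $ i = 0" using h i by simp
    then show "x $ i = y $ i" using assms i by simp
  qed (use assms in simp)
qed (use assms in simp)

lemma card_pairs_snd:
  fixes S :: "('a::finite vec \<times> 'a vec) set"
  assumes "S \<subseteq> carrier_vec n \<times> carrier_vec n"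
  shows "card S = (\<Sum>v\<in>carrier_vec n. card {u. (u,v) \<in> S})"
proof -
  have fin: "finite S" using assms by (rule finite_subset) (intro finite_cartesian_product finite_carrier_vec)
  have "card S = (\<Sum>v\<in>carrier_vec n. card {p\<in>S. snd p = v})"
    by (rule card_fibers[OF fin]) (use assms in auto)
  also have "\<dots> = (\<Sum>v\<in>carrier_vec n. card {u. (u,v) \<in> S})"
  proof (rule sum.cong[OF refl])
    fix v
    have "{p\<in>S. snd p = v} = (\<lambda>u. (u,v)) ` {u. (u,v) \<in> S}" by force
    moreover have "inj_on (\<lambda>u. (u,v)) {u. (u,v) \<in> S}" by (auto intro: inj_onI)
    ultimately show "card {p\<in>S. snd p = v} = card {u. (u,v) \<in> S}" by (simp add: card_image)
  qed
  finally show ?thesis .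
qed

lemma pair_count:
  fixes a b :: "'a::{finite,field} vec"
  assumes a: "a \<in> carrier_vec n" and b: "b \<in> carrier_vec n" and ab: "a \<noteq> 0\<^sub>v n \<or> b \<noteq> 0\<^sub>v n"
  shows "card (UNIV::'a set) * card {(u,v). u \<in> carrier_vec n \<and> v \<in> carrier_vec n \<and> u \<bullet> a = v \<bullet> b}
     = card (UNIV::'a set) ^ n * card (UNIV::'a set) ^ n"
proof (cases "a = 0\<^sub>v n")
  case False
  let ?S = "{(u,v). u \<in> carrier_vec n \<and> v \<in> carrier_vec n \<and> u \<bullet> a = v \<bullet> b}"
  have "card ?S = (\<Sum>v\<in>carrier_vec n. card {u. (u,v::'a vec) \<in> ?S})"
    by (rule card_pairs_snd) auto
  also have "\<dots> = (\<Sum>v\<in>carrier_vec n. card {u \<in> carrier_vec n. a \<bullet> u = (v::'a vec) \<bullet> b})"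
  proof (rule sum.cong[OF refl])
    fix v :: "'a vec" assume v: "v \<in> carrier_vec n"
    have "{u. (u,v) \<in> ?S} = {u \<in> carrier_vec n. a \<bullet> u = v \<bullet> b}"
      using v a comm_scalar_prod[OF a] by auto
    then show "card {u. (u,v) \<in> ?S} = card {u \<in> carrier_vec n. a \<bullet> u = v \<bullet> b}" by simp
  qed
  finally have "card (UNIV::'a set) * card ?S = (\<Sum>v\<in>carrier_vec n. card (UNIV::'a set) * card {u \<in> carrier_vec n. a \<bullet> u = v \<bullet> b})"
    by (simp add: sum_distrib_left)
  also have "\<dots> = (\<Sum>v\<in>(carrier_vec n :: 'a vec set). card (UNIV::'a set) ^ n)"
    by (rule sum.cong[OF refl]) (rule functional_count[OF a False])
  finally show ?thesis by (simp add: card_carrier_vec)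
next
  case True
  then have bne: "b \<noteq> 0\<^sub>v n" using ab by simp
  let ?S = "{(u,v). u \<in> carrier_vec n \<and> v \<in> carrier_vec n \<and> u \<bullet> a = v \<bullet> b}"
  have "?S = carrier_vec n \<times> {v \<in> carrier_vec n. b \<bullet> v = 0}"
    using True comm_scalar_prod[OF b] by auto
  then have "card (UNIV::'a set) * card ?S = card (carrier_vec n :: 'a vec set) * (card (UNIV::'a set) * card {v \<in> carrier_vec n. b \<bullet> v = 0})"
    by (simp add: card_cartesian_product)
  also have "\<dots> = card (UNIV::'a set) ^ n * card (UNIV::'a set) ^ n"
    by (simp add: card_carrier_vec functional_count[OF b bne])
  finally show ?thesis .
qed

lemma sum_if_const:
  fixes a b :: nat
  assumes "finite A"
  shows "(\<Sum>x\<in>A. if P x then a else b) = card {x\<in>A. P x} * a + (card A - card {x\<in>A. P x}) * b"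
proof -
  have A: "A = {x\<in>A. P x} \<union> {x\<in>A. \<not> P x}" by auto
  have "(\<Sum>x\<in>A. if P x then a else b) = (\<Sum>x\<in>{x\<in>A. P x}. if P x then a else b) + (\<Sum>x\<in>{x\<in>A. \<not> P x}. if P x then a else b)"
    using assms by (subst A, subst sum.union_disjoint) auto
  also have "\<dots> = card {x\<in>A. P x} * a + card {x\<in>A. \<not> P x} * b" by simp
  also have "card {x\<in>A. \<not> P x} = card A - card {x\<in>A. P x}"
  proof -
    have "card ({x\<in>A. P x} \<union> {x\<in>A. \<not> P x}) = card {x\<in>A. P x} + card {x\<in>A. \<not> P x}"
      using assms by (intro card_Un_disjoint) auto
    then show ?thesis using A by simp
  qed
  finally show ?thesis .
qed

lemma card_field_ge2: "2 \<le> card (UNIV :: 'a::{finite,field} set)"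
proof -
  have "card {0::'a, 1} = 2" by simp
  moreover have "card {0::'a, 1} \<le> card (UNIV :: 'a set)" by (rule card_mono) auto
  ultimately show ?thesis by simp
qed

lemma mv_carrier: "A \<in> carrier_mat nr nc \<Longrightarrow> A *\<^sub>v v \<in> carrier_vec nr"
  by (intro carrier_vecI) simp

lemma key:
  fixes P Q :: "'a::{finite,field} mat"
  assumes P: "P \<in> carrier_mat n n" and Q: "Q \<in> carrier_mat n n"
  shows "card {(u,v). u \<in> carrier_vec n \<and> v \<in> carrier_vec n \<and> transpose_mat P *\<^sub>v u = transpose_mat Q *\<^sub>v v}
         = card (UNIV::'a set)^n * card {y \<in> carrier_vec n. P *\<^sub>v y = 0\<^sub>v n \<and> Q *\<^sub>v y = 0\<^sub>v n}"
proof -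
  let ?q = "card (UNIV::'a set)"
  let ?V = "carrier_vec n :: 'a vec set"
  let ?W = "?V \<times> ?V"
  define cw where "cw w = transpose_mat P *\<^sub>v fst w - transpose_mat Q *\<^sub>v snd w" for w :: "'a vec \<times> 'a vec"
  have cwc: "cw w \<in> ?V" for w unfolding cw_def carrier_vec_def using P Q by simp
  have dot: "cw w \<bullet> y = fst w \<bullet> (P *\<^sub>v y) - snd w \<bullet> (Q *\<^sub>v y)" if w: "w \<in> ?W" and y: "y \<in> ?V" for w y
  proof -
    have "cw w \<bullet> y = (transpose_mat P *\<^sub>v fst w) \<bullet> y - (transpose_mat Q *\<^sub>v snd w) \<bullet> y"
      unfolding cw_def using P Q w y by (intro minus_scalar_prod_distrib[of _ n]) auto
    also have "\<dots> = fst w \<bullet> (P *\<^sub>v y) - snd w \<bullet> (Q *\<^sub>v y)"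
    proof -
      have "fst w \<in> ?V" "snd w \<in> ?V" using w by auto
      then show ?thesis by (simp add: transpose_vec_mult_scalar[OF P y] transpose_vec_mult_scalar[OF Q y])
    qed
    finally show ?thesis .
  qed
  define N1 where "N1 = card {w\<in>?W. cw w = 0\<^sub>v n}"
  define N2 where "N2 = card {y\<in>?V. P *\<^sub>v y = 0\<^sub>v n \<and> Q *\<^sub>v y = 0\<^sub>v n}"
  have N1eq: "{w\<in>?W. cw w = 0\<^sub>v n} = {(u,v). u \<in> carrier_vec n \<and> v \<in> carrier_vec n \<and> transpose_mat P *\<^sub>v u = transpose_mat Q *\<^sub>v v}"
  proof -
    have eqv: "cw (u,v) = 0\<^sub>v n \<longleftrightarrow> transpose_mat P *\<^sub>v u = transpose_mat Q *\<^sub>v v" for u v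
      unfolding cw_def fst_conv snd_conv
      by (intro vec_minus_eq_0_iff mv_carrier) (use P Q in auto)
    show ?thesis
    proof (rule Set.set_eqI)
      fix w :: "'a vec \<times> 'a vec"
      obtain u v where w: "w = (u,v)" by (cases w)
      show "w \<in> {w\<in>?W. cw w = 0\<^sub>v n} \<longleftrightarrow> w \<in> {(u,v). u \<in> carrier_vec n \<and> v \<in> carrier_vec n \<and> transpose_mat P *\<^sub>v u = transpose_mat Q *\<^sub>v v}"
        unfolding w using eqv[of u v] by simp
    qed
  qed
  define Z where "Z = Sigma ?W (\<lambda>w. {y\<in>?V. cw w \<bullet> y = 0})"
  have finW: "finite ?W" by simp
  have cardW: "card ?W = ?q^n * ?q^n" by (simp add: card_cartesian_product card_carrier_vec)
  have N1le: "N1 \<le> ?q^n * ?q^n" unfolding N1_def cardW[symmetric] by (rule card_mono[OF finW]) auto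
  have N2le: "N2 \<le> ?q^n" unfolding N2_def card_carrier_vec[symmetric] by (rule card_mono) auto
  have "?q * card Z = (\<Sum>w\<in>?W. ?q * card {y\<in>?V. cw w \<bullet> y = 0})"
    unfolding Z_def by (subst card_SigmaI) (auto simp: sum_distrib_left)
  also have "\<dots> = (\<Sum>w\<in>?W. if cw w = 0\<^sub>v n then ?q * ?q^n else ?q^n)"
  proof (rule sum.cong[OF refl])
    fix w assume w: "w \<in> ?W"
    show "?q * card {y\<in>?V. cw w \<bullet> y = 0} = (if cw w = 0\<^sub>v n then ?q * ?q^n else ?q^n)"
    proof (cases "cw w = 0\<^sub>v n")
      case True
      then have "{y\<in>?V. cw w \<bullet> y = 0} = ?V" by auto
      then show ?thesis using True by (simp add: card_carrier_vec)
    qed (simp add: functional_count[OF cwc])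
  qed
  also have "\<dots> = N1 * (?q * ?q^n) + (?q^n * ?q^n - N1) * ?q^n"
    unfolding N1_def cardW[symmetric] by (rule sum_if_const[OF finW])
  finally have Z1: "?q * card Z = N1 * (?q * ?q^n) + (?q^n * ?q^n - N1) * ?q^n" .
  define Z' where "Z' = Sigma ?V (\<lambda>y. {w\<in>?W. cw w \<bullet> y = 0})"
  have "Z' = (\<lambda>(w,y). (y,w)) ` Z" unfolding Z_def Z'_def by auto
  moreover have "inj_on (\<lambda>(w,y). (y,w)) Z" by (auto intro: inj_onI)
  ultimately have ZZ: "card Z' = card Z" by (simp add: card_image)
  have "?q * card Z' = (\<Sum>y\<in>?V. ?q * card {w\<in>?W. cw w \<bullet> y = 0})"
    unfolding Z'_def by (subst card_SigmaI) (auto simp: sum_distrib_left)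
  also have "\<dots> = (\<Sum>y\<in>?V. if P *\<^sub>v y = 0\<^sub>v n \<and> Q *\<^sub>v y = 0\<^sub>v n then ?q * (?q^n * ?q^n) else ?q^n * ?q^n)"
  proof (rule sum.cong[OF refl])
    fix y assume y: "y \<in> ?V"
    have Py: "P *\<^sub>v y \<in> ?V" and Qy: "Q *\<^sub>v y \<in> ?V" using P Q y by auto
    have seteq: "{w\<in>?W. cw w \<bullet> y = 0} = {(u,v). u \<in> ?V \<and> v \<in> ?V \<and> u \<bullet> (P *\<^sub>v y) = v \<bullet> (Q *\<^sub>v y)}"
      using dot y by auto
    show "?q * card {w\<in>?W. cw w \<bullet> y = 0} = (if P *\<^sub>v y = 0\<^sub>v n \<and> Q *\<^sub>v y = 0\<^sub>v n then ?q * (?q^n * ?q^n) else ?q^n * ?q^n)"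
    proof (cases "P *\<^sub>v y = 0\<^sub>v n \<and> Q *\<^sub>v y = 0\<^sub>v n")
      case True
      then have "{w\<in>?W. cw w \<bullet> y = 0} = ?W" unfolding seteq by auto
      then show ?thesis using True cardW by simp
    next
      case False
      then show ?thesis unfolding seteq using pair_count[OF Py Qy] by auto
    qed
  qed
  also have "\<dots> = N2 * (?q * (?q^n * ?q^n)) + (?q^n - N2) * (?q^n * ?q^n)"
    unfolding N2_def card_carrier_vec[symmetric] by (rule sum_if_const) simp
  finally have Z2: "?q * card Z = N2 * (?q * (?q^n * ?q^n)) + (?q^n - N2) * (?q^n * ?q^n)" using ZZ by simp
  have q2: "2 \<le> ?q" by (rule card_field_ge2)
  define Qn where "Qn = ?q^n"
  have Qpos: "Qn > 0" unfolding Qn_def using q2 by simp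
  from Z1 Z2 have "N1 * (?q * Qn) + (Qn * Qn - N1) * Qn = N2 * (?q * (Qn * Qn)) + (Qn - N2) * (Qn * Qn)"
    unfolding Qn_def by simp
  then have "int N1 * (int ?q * int Qn) + (int Qn * int Qn - int N1) * int Qn = int N2 * (int ?q * (int Qn * int Qn)) + (int Qn - int N2) * (int Qn * int Qn)"
    using N1le N2le unfolding Qn_def[symmetric]
    by (metis (no_types, lifting) of_nat_add of_nat_diff of_nat_mult)
  then have "(int N1 - int N2 * int Qn) * (int Qn * (int ?q - 1)) = 0" by (simp add: algebra_simps)
  moreover have "int Qn * (int ?q - 1) \<noteq> 0" using Qpos q2 by simp
  ultimately have "int N1 = int N2 * int Qn" by simp
  then have "N1 = Qn * N2" by (metis of_nat_eq_iff of_nat_mult mult.commute)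
  then show ?thesis unfolding N1_def N1eq N2_def Qn_def .
qed

lemma (in group) conj_fix_iff:
  assumes g: "g \<in> carrier G" and x: "x \<in> carrier G"
  shows "(g \<otimes> x \<otimes> inv g = x) \<longleftrightarrow> (g \<otimes> x = x \<otimes> g)"
proof
  assume h: "g \<otimes> x \<otimes> inv g = x"
  have "g \<otimes> x = g \<otimes> x \<otimes> inv g \<otimes> g" using g x by (simp add: m_assoc)
  also have "\<dots> = x \<otimes> g" using h by simp
  finally show "g \<otimes> x = x \<otimes> g" .
next
  assume h: "g \<otimes> x = x \<otimes> g"
  have "g \<otimes> x \<otimes> inv g = x \<otimes> g \<otimes> inv g" using h by simp
  also have "\<dots> = x" using g x by (simp add: m_assoc)
  finally show "g \<otimes> x \<otimes> inv g = x" .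
qed

lemma class_eq:
  fixes G (structure)
  assumes grp: "group G" and fin: "finite (carrier G)"
  shows "card (conj_classes G) * order G
         = card {(x,y). x \<in> carrier G \<and> y \<in> carrier G \<and> x \<otimes>\<^bsub>G\<^esub> y = y \<otimes>\<^bsub>G\<^esub> x}"
proof -
  interpret group G by (rule grp)
  let ?phi = "\<lambda>g. \<lambda>h \<in> carrier G. g \<otimes> h \<otimes> inv g"
  interpret ga: group_action G "carrier G" ?phi by (rule action_by_conjugation)
  have B: "card (orbits G (carrier G) ?phi) * order G = (\<Sum>g\<in>carrier G. card (invariants (carrier G) ?phi g))"
    by (rule ga.burnside) (use fin in auto)
  have O: "orbits G (carrier G) ?phi = conj_classes G"
  proof -
    have "orbit G ?phi x = {g \<otimes> x \<otimes> inv g | g. g \<in> carrier G}" if "x \<in> carrier G" for x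
      unfolding orbit_def using that by auto
    then show ?thesis unfolding orbits_def conj_classes_def by auto
  qed
  have I: "invariants (carrier G) ?phi g = {x \<in> carrier G. g \<otimes> x = x \<otimes> g}" if g: "g \<in> carrier G" for g
    unfolding invariants_def using conj_fix_iff[OF g] by auto
  have "card (conj_classes G) * order G = (\<Sum>g\<in>carrier G. card (invariants (carrier G) ?phi g))"
    using B unfolding O .
  also have "\<dots> = (\<Sum>g\<in>carrier G. card {x \<in> carrier G. g \<otimes> x = x \<otimes> g})"
    by (rule sum.cong[OF refl]) (simp add: I)
  also have "\<dots> = card (Sigma (carrier G) (\<lambda>g. {x \<in> carrier G. g \<otimes> x = x \<otimes> g}))"
    by (rule card_SigmaI[symmetric]) (use fin in auto)
  also have "Sigma (carrier G) (\<lambda>g. {x \<in> carrier G. g \<otimes> x = x \<otimes> g}) = {(x,y). x \<in> carrier G \<and> y \<in> carrier G \<and> x \<otimes> y = y \<otimes> x}"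
    by auto
  finally show ?thesis .
qed

lemma invertible_iff_det:
  fixes A :: "'a::field mat"
  assumes A: "A \<in> carrier_mat n n"
  shows "invertible_mat A \<longleftrightarrow> det A \<noteq> 0"
proof
  assume "invertible_mat A"
  then obtain B where AB: "A * B = 1\<^sub>m n" and BA: "B * A = 1\<^sub>m (dim_row B)"
    unfolding invertible_mat_def inverts_mat_def using A by auto
  have "dim_row B = n" using BA A by (metis carrier_matD(2) index_mult_mat(3) index_one_mat(3))
  moreover have "dim_col B = n" using AB A by (metis index_mult_mat(3) index_one_mat(3))
  ultimately have B: "B \<in> carrier_mat n n" by auto
  have "det A * det B = 1" using det_mult[OF A B] AB by simp
  then show "det A \<noteq> 0" by auto
next
  assume "det A \<noteq> 0"
  from det_non_zero_imp_unit[OF A this, of "()"]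
  obtain B where B: "B \<in> carrier_mat n n" "A * B = 1\<^sub>m n" "B * A = 1\<^sub>m n"
    unfolding Units_def ring_mat_def by auto
  then show "invertible_mat A" unfolding invertible_mat_def inverts_mat_def using A by auto
qed

lemma GL_carrier: "carrier (GL_group n) = {A \<in> carrier_mat n n. det A \<noteq> (0::'a::field)}"
  unfolding GL_group_def using invertible_iff_det by auto

lemma GL_inverse:
  fixes A :: "'a::field mat"
  assumes "A \<in> carrier (GL_group n)"
  obtains B where "B \<in> carrier (GL_group n)" "A * B = 1\<^sub>m n" "B * A = 1\<^sub>m n"
proof -
  have A: "A \<in> carrier_mat n n" "det A \<noteq> 0" using assms GL_carrier by auto
  from det_non_zero_imp_unit[OF A, of "()"]
  obtain B where B: "B \<in> carrier_mat n n" "A * B = 1\<^sub>m n" "B * A = 1\<^sub>m n"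
    unfolding Units_def ring_mat_def by auto
  have "det B * det A = 1" using det_mult[OF B(1) A(1)] B(3) by simp
  then have "det B \<noteq> 0" by auto
  then show ?thesis using that B GL_carrier by auto
qed

lemma GL_group: "group (GL_group n :: 'a::field mat monoid)"
proof (rule groupI)
  show "x \<otimes>\<^bsub>GL_group n\<^esub> y \<in> carrier (GL_group n)" if "x \<in> carrier (GL_group n)" "y \<in> carrier (GL_group n)" for x y :: "'a mat"
    using that unfolding GL_carrier by (auto simp: GL_group_def det_mult[of _ n])
  show "\<one>\<^bsub>GL_group n\<^esub> \<in> carrier (GL_group (n::nat) :: 'a mat monoid)"
    unfolding GL_carrier by (simp add: GL_group_def)
  show "x \<otimes>\<^bsub>GL_group n\<^esub> y \<otimes>\<^bsub>GL_group n\<^esub> z = x \<otimes>\<^bsub>GL_group n\<^esub> (y \<otimes>\<^bsub>GL_group n\<^esub> z)"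
    if "x \<in> carrier (GL_group n)" "y \<in> carrier (GL_group n)" "z \<in> carrier (GL_group n)" for x y z :: "'a mat"
    using that unfolding GL_carrier by (simp add: GL_group_def assoc_mult_mat[of _ n n _ n _ n])
  show "\<one>\<^bsub>GL_group n\<^esub> \<otimes>\<^bsub>GL_group n\<^esub> x = x" if "x \<in> carrier (GL_group n)" for x :: "'a mat"
    using that unfolding GL_carrier by (auto simp: GL_group_def)
  show "\<exists>y\<in>carrier (GL_group n). y \<otimes>\<^bsub>GL_group n\<^esub> x = \<one>\<^bsub>GL_group n\<^esub>" if x: "x \<in> carrier (GL_group n)" for x :: "'a mat"
  proof -
    obtain B where "B \<in> carrier (GL_group n)" "x * B = 1\<^sub>m n" "B * x = 1\<^sub>m n" using GL_inverse[OF x] by blast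
    then show ?thesis by (auto simp: GL_group_def)
  qed
qed

definition fbm :: "nat \<Rightarrow> 'a::field mat \<Rightarrow> 'a mat \<Rightarrow> 'a mat" where
  "fbm n u A = four_block_mat (1\<^sub>m 1) u (0\<^sub>m n 1) A"

definition Stab :: "nat \<Rightarrow> 'a::field vec \<Rightarrow> 'a mat set" where
  "Stab n y = {M \<in> carrier (GL_group n). M *\<^sub>v y = y}"

lemma AGL_carrier_fbm: "carrier (AGL_group n) = {fbm n u A | u A. u \<in> carrier_mat 1 n \<and> A \<in> carrier (GL_group n)}"
  unfolding AGL_group_def fbm_def by simp

lemma fbm_carrier: "u \<in> carrier_mat 1 n \<Longrightarrow> A \<in> carrier_mat n n \<Longrightarrow> fbm n u A \<in> carrier_mat (Suc n) (Suc n)"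
  unfolding fbm_def using four_block_carrier_mat[of "1\<^sub>m 1" 1 1 A n n] by simp

lemma fbm_index:
  assumes "u \<in> carrier_mat 1 n" "A \<in> carrier_mat n n" "i < Suc n" "j < Suc n"
  shows "fbm n u A $$ (i,j) = (if i = 0 then (if j = 0 then 1 else u $$ (0, j - 1))
                              else (if j = 0 then 0 else A $$ (i - 1, j - 1)))"
  using assms unfolding fbm_def by (subst index_mat_four_block) auto

lemma fbm_mult:
  fixes u v A B :: "'a::field mat"
  assumes u: "u \<in> carrier_mat 1 n" and v: "v \<in> carrier_mat 1 n" and A: "A \<in> carrier_mat n n" and B: "B \<in> carrier_mat n n"
  shows "fbm n u A * fbm n v B = fbm n (v + u * B) (A * B)"
proof -
  have "fbm n u A * fbm n v B = four_block_mat (1\<^sub>m 1 * 1\<^sub>m 1 + u * 0\<^sub>m n 1) (1\<^sub>m 1 * v + u * B)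
      (0\<^sub>m n 1 * 1\<^sub>m 1 + A * 0\<^sub>m n 1) (0\<^sub>m n 1 * v + A * B)"
    unfolding fbm_def by (rule mult_four_block_mat) (use u v A B in auto)
  also have "\<dots> = fbm n (v + u * B) (A * B)"
    unfolding fbm_def using u v A B by (intro cong_four_block_mat) auto
  finally show ?thesis .
qed

lemma fbm_inj:
  fixes u v A B :: "'a::field mat"
  assumes u: "u \<in> carrier_mat 1 n" and v: "v \<in> carrier_mat 1 n" and A: "A \<in> carrier_mat n n" and B: "B \<in> carrier_mat n n"
    and eq: "fbm n u A = fbm n v B"
  shows "u = v \<and> A = B"
proof
  show "u = v"
  proof (rule eq_matI)
    fix i j assume "i < dim_row v" "j < dim_col v"
    then have i: "i = 0" and j: "j < n" using v by auto
    have "fbm n u A $$ (0, Suc j) = fbm n v B $$ (0, Suc j)" using eq by simp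
    then show "u $$ (i,j) = v $$ (i,j)" using fbm_index[OF u A, of 0 "Suc j"] fbm_index[OF v B, of 0 "Suc j"] i j by simp
  qed (use u v in auto)
  show "A = B"
  proof (rule eq_matI)
    fix i j assume "i < dim_row B" "j < dim_col B"
    then have i: "i < n" and j: "j < n" using B by auto
    have "fbm n u A $$ (Suc i, Suc j) = fbm n v B $$ (Suc i, Suc j)" using eq by simp
    then show "A $$ (i,j) = B $$ (i,j)" using fbm_index[OF u A, of "Suc i" "Suc j"] fbm_index[OF v B, of "Suc i" "Suc j"] i j by simp
  qed (use A B in auto)
qed

lemma fbm_det:
  assumes u: "u \<in> carrier_mat 1 n" and A: "A \<in> carrier_mat n n"
  shows "det (fbm n u A) = det (A :: 'a::field mat)"
  unfolding fbm_def using det_four_block_mat_lower_left_zero_col[OF _ u refl A, of "1\<^sub>m 1"] by simp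

lemma mult_unit_vec0:
  fixes M :: "'a::field mat"
  assumes M: "M \<in> carrier_mat m m" and m: "0 < m"
    and i: "i < m"
  shows "(M *\<^sub>v unit_vec m 0) $ i = M $$ (i,0)"
proof -
  have "(M *\<^sub>v unit_vec m 0) $ i = row M i \<bullet> unit_vec m 0" using M i by simp
  also have "\<dots> = row M i $ 0" by (rule scalar_prod_right_unit[OF m])
  also have "\<dots> = M $$ (i,0)" using M m i by simp
  finally show ?thesis .
qed

lemma AGL_carrier_Stab: "carrier (AGL_group n) = Stab (Suc n) (unit_vec (Suc n) (0::nat) :: 'a::field vec)"
proof (intro equalityI subsetI)
  fix M :: "'a mat" assume "M \<in> carrier (AGL_group n)"
  then obtain u A where M: "M = fbm n u A" and u: "u \<in> carrier_mat 1 n" and A: "A \<in> carrier (GL_group n)"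
    unfolding AGL_carrier_fbm by blast
  have Ac: "A \<in> carrier_mat n n" "det A \<noteq> 0" using A GL_carrier by auto
  have Mc: "M \<in> carrier_mat (Suc n) (Suc n)" using fbm_carrier[OF u Ac(1)] M by simp
  have "det M \<noteq> 0" using fbm_det[OF u Ac(1)] Ac M by simp
  moreover have "M *\<^sub>v unit_vec (Suc n) 0 = unit_vec (Suc n) 0"
  proof (rule eq_vecI)
    fix i assume "i < dim_vec (unit_vec (Suc n) 0 :: 'a vec)"
    then have i: "i < Suc n" by simp
    show "(M *\<^sub>v unit_vec (Suc n) 0) $ i = unit_vec (Suc n) 0 $ i"
      using mult_unit_vec0[OF Mc _ i] fbm_index[OF u Ac(1) i, of 0] M i by simp
  qed (use Mc in simp)
  ultimately show "M \<in> Stab (Suc n) (unit_vec (Suc n) 0)" unfolding Stab_def GL_carrier using Mc by simp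
next
  fix M :: "'a mat" assume "M \<in> Stab (Suc n) (unit_vec (Suc n) 0)"
  then have Mc: "M \<in> carrier_mat (Suc n) (Suc n)" and dM: "det M \<noteq> 0" and Me: "M *\<^sub>v unit_vec (Suc n) 0 = unit_vec (Suc n) 0"
    unfolding Stab_def GL_carrier by auto
  have col0: "M $$ (i,0) = (if i = 0 then 1 else 0)" if "i < Suc n" for i
    using mult_unit_vec0[OF Mc _ that] Me that by simp
  define u :: "'a mat" where "u = mat 1 n (\<lambda>(i,j). M $$ (0, Suc j))"
  define A :: "'a mat" where "A = mat n n (\<lambda>(i,j). M $$ (Suc i, Suc j))"
  have u: "u \<in> carrier_mat 1 n" and A: "A \<in> carrier_mat n n" unfolding u_def A_def by auto
  have MA: "M = fbm n u A"
  proof (rule eq_matI)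
    fix i j assume "i < dim_row (fbm n u A)" "j < dim_col (fbm n u A)"
    then have i: "i < Suc n" and j: "j < Suc n" using fbm_carrier[OF u A] by auto
    show "M $$ (i,j) = fbm n u A $$ (i,j)"
      unfolding fbm_index[OF u A i j] using col0[OF i] i j unfolding u_def A_def by auto
  qed (use Mc fbm_carrier[OF u A] in auto)
  have "det A \<noteq> 0" using dM fbm_det[OF u A] MA by simp
  then have "A \<in> carrier (GL_group n)" using A GL_carrier by auto
  then show "M \<in> carrier (AGL_group n)" unfolding AGL_carrier_fbm using MA u by blast
qed

lemma AGL_mult[simp]: "x \<otimes>\<^bsub>AGL_group n\<^esub> y = x * y" and AGL_one[simp]: "\<one>\<^bsub>AGL_group n\<^esub> = 1\<^sub>m (Suc n)"
  unfolding AGL_group_def by simp_all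

lemma GL_mult[simp]: "x \<otimes>\<^bsub>GL_group n\<^esub> y = x * y" and GL_one[simp]: "\<one>\<^bsub>GL_group n\<^esub> = 1\<^sub>m n"
  unfolding GL_group_def by simp_all

lemma Stab_iff: "M \<in> Stab n y \<longleftrightarrow> M \<in> carrier_mat n n \<and> det M \<noteq> 0 \<and> M *\<^sub>v y = y"
  unfolding Stab_def GL_carrier by auto

lemma AGL_group: "group (AGL_group n :: 'a::field mat monoid)"
proof (rule groupI)
  let ?e = "unit_vec (Suc n) 0 :: 'a vec"
  have ec: "?e \<in> carrier_vec (Suc n)" by simp
  note C = AGL_carrier_Stab[of n, where 'a='a] Stab_iff
  show "x \<otimes>\<^bsub>AGL_group n\<^esub> y \<in> carrier (AGL_group n)" if "x \<in> carrier (AGL_group n)" "y \<in> carrier (AGL_group n)" for x y :: "'a mat"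
    using that unfolding C by (auto simp: det_mult[of _ "Suc n"] assoc_mult_mat_vec[of _ "Suc n" "Suc n" _ "Suc n"])
  show "\<one>\<^bsub>AGL_group n\<^esub> \<in> carrier (AGL_group n :: 'a mat monoid)"
    unfolding C by simp
  show "x \<otimes>\<^bsub>AGL_group n\<^esub> y \<otimes>\<^bsub>AGL_group n\<^esub> z = x \<otimes>\<^bsub>AGL_group n\<^esub> (y \<otimes>\<^bsub>AGL_group n\<^esub> z)"
    if "x \<in> carrier (AGL_group n)" "y \<in> carrier (AGL_group n)" "z \<in> carrier (AGL_group n)" for x y z :: "'a mat"
    using that unfolding C by (simp add: assoc_mult_mat[of _ "Suc n" "Suc n" _ "Suc n" _ "Suc n"])
  show "\<one>\<^bsub>AGL_group n\<^esub> \<otimes>\<^bsub>AGL_group n\<^esub> x = x" if "x \<in> carrier (AGL_group n)" for x :: "'a mat"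
    using that unfolding C by auto
  show "\<exists>y\<in>carrier (AGL_group n). y \<otimes>\<^bsub>AGL_group n\<^esub> x = \<one>\<^bsub>AGL_group n\<^esub>" if x: "x \<in> carrier (AGL_group n)" for x :: "'a mat"
  proof -
    have xs: "x \<in> Stab (Suc n) ?e" using x C by simp
    then have xG: "x \<in> carrier (GL_group (Suc n))" and xe: "x *\<^sub>v ?e = ?e" unfolding Stab_def by auto
    obtain B where B: "B \<in> carrier (GL_group (Suc n))" "x * B = 1\<^sub>m (Suc n)" "B * x = 1\<^sub>m (Suc n)"
      using GL_inverse[OF xG] by blast
    have Bc: "B \<in> carrier_mat (Suc n) (Suc n)" and xc: "x \<in> carrier_mat (Suc n) (Suc n)"
      using B(1) xG GL_carrier by auto
    have "B *\<^sub>v ?e = B *\<^sub>v (x *\<^sub>v ?e)" using xe by simp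
    also have "\<dots> = (B * x) *\<^sub>v ?e" using Bc xc by (simp add: assoc_mult_mat_vec[of _ "Suc n" "Suc n" _ "Suc n"])
    also have "\<dots> = ?e" using B(3) by simp
    finally have "B \<in> carrier (AGL_group n)" unfolding AGL_carrier_Stab Stab_def using B(1) by simp
    then show ?thesis using B(3) by auto
  qed
qed

lemma transitive:
  fixes y :: "'a::field vec"
  assumes y: "y \<in> carrier_vec (Suc m)" and yne: "y \<noteq> 0\<^sub>v (Suc m)"
  shows "\<exists>g \<in> carrier (GL_group (Suc m)). g *\<^sub>v unit_vec (Suc m) 0 = y"
proof -
  let ?n = "Suc m"
  have "\<exists>i<?n. y $ i \<noteq> 0"
  proof (rule ccontr)
    assume "\<not> (\<exists>i<?n. y $ i \<noteq> 0)"
    then have "y = 0\<^sub>v ?n" using y by (intro eq_vecI) auto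
    then show False using yne by simp
  qed
  then obtain i where i: "i < ?n" "y $ i \<noteq> 0" by blast
  define g :: "'a mat" where "g = mat ?n ?n (\<lambda>(r,c). (if r = c then 1 else 0)
     + (if c = 0 then y $ r - (if r = 0 then 1 else 0) else 0)
     + (if y $ 0 = 0 \<and> r = 0 \<and> c = i then 1 else 0))"
  have gc: "g \<in> carrier_mat ?n ?n" unfolding g_def by simp
  have rowdot: "row g r \<bullet> x = x $ r + x $ 0 * (y $ r - (if r = 0 then 1 else 0)) + (if y $ 0 = 0 \<and> r = 0 then x $ i else 0)"
    if r: "r < ?n" and x: "x \<in> carrier_vec ?n" for r x
  proof -
    have "row g r \<bullet> x = (\<Sum>c\<in>{0..<?n}. g $$ (r,c) * x $ c)"
      unfolding scalar_prod_def using x r gc by (intro sum.cong) auto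
    also have "\<dots> = (\<Sum>c\<in>{0..<?n}. (if r = c then x $ c else 0)
         + (if c = 0 then (y $ r - (if r = 0 then 1 else 0)) * x $ c else 0)
         + (if y $ 0 = 0 \<and> r = 0 \<and> c = i then x $ c else 0))"
      unfolding g_def using r by (intro sum.cong) (auto simp: algebra_simps)
    also have "\<dots> = (\<Sum>c\<in>{0..<?n}. (if r = c then x $ c else 0))
         + (\<Sum>c\<in>{0..<?n}. (if c = 0 then (y $ r - (if r = 0 then 1 else 0)) * x $ c else 0))
         + (\<Sum>c\<in>{0..<?n}. (if y $ 0 = 0 \<and> r = 0 \<and> c = i then x $ c else 0))"
      by (simp only: sum.distrib)
    also have "(\<Sum>c\<in>{0..<?n}. (if r = c then x $ c else 0)) = x $ r"
      using r by (subst sum.delta') auto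
    also have "(\<Sum>c\<in>{0..<?n}. (if c = 0 then (y $ r - (if r = 0 then 1 else 0)) * x $ c else 0))
        = (y $ r - (if r = 0 then 1 else 0)) * x $ 0"
      by (subst sum.delta) auto
    also have "(\<Sum>c\<in>{0..<?n}. (if y $ 0 = 0 \<and> r = 0 \<and> c = i then x $ c else 0))
        = (if y $ 0 = 0 \<and> r = 0 then x $ i else 0)"
    proof (cases "y $ 0 = 0 \<and> r = 0")
      case True
      then show ?thesis using i by (simp add: sum.delta)
    next
      case False
      then have eq0: "(\<lambda>c. if y $ 0 = 0 \<and> r = 0 \<and> c = i then x $ c else 0) = (\<lambda>c. 0)" by auto
      show ?thesis by (subst eq0) (use False in auto)
    qed
    finally show ?thesis by (simp add: algebra_simps)
  qed
  have ge: "g *\<^sub>v unit_vec ?n 0 = y"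
  proof (rule eq_vecI)
    fix r assume "r < dim_vec y"
    then have r: "r < ?n" using y by simp
    have "(g *\<^sub>v unit_vec ?n 0) $ r = row g r \<bullet> unit_vec ?n 0" using gc r by simp
    also have "\<dots> = y $ r" using rowdot[OF r, of "unit_vec ?n 0"] r i by auto
    finally show "(g *\<^sub>v unit_vec ?n 0) $ r = y $ r" .
  qed (use gc y in simp)
  have "det g \<noteq> 0"
  proof
    assume "det g = 0"
    then obtain x where x: "x \<in> carrier_vec ?n" "x \<noteq> 0\<^sub>v ?n" "g *\<^sub>v x = 0\<^sub>v ?n"
      using det_0_iff_vec_prod_zero_field[OF gc] by blast
    have comp: "x $ r + x $ 0 * (y $ r - (if r = 0 then 1 else 0)) + (if y $ 0 = 0 \<and> r = 0 then x $ i else 0) = 0"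
      if r: "r < ?n" for r
    proof -
      have "(g *\<^sub>v x) $ r = 0" using x(3) r by simp
      then show ?thesis using rowdot[OF r x(1)] gc r by simp
    qed
    have x0: "x $ 0 = 0"
    proof (cases "y $ 0 = 0")
      case False
      have "x $ 0 + x $ 0 * (y $ 0 - 1) = 0" using comp[of 0] False by simp
      then have "x $ 0 * y $ 0 = 0" by (simp add: algebra_simps)
      then show ?thesis using False by simp
    next
      case True
      have i0: "i \<noteq> 0"
      proof
        assume "i = 0"
        then show False using i(2) True by simp
      qed
      have "x $ i = 0" using comp[of 0] True by simp
      moreover have "x $ i + x $ 0 * y $ i = 0" using comp[OF i(1)] i0 by simp
      ultimately show ?thesis using i by simp
    qed
    have "x = 0\<^sub>v ?n"
    proof (rule eq_vecI)
      fix r assume "r < dim_vec (0\<^sub>v ?n :: 'a vec)"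
      then have r: "r < ?n" by simp
      show "x $ r = 0\<^sub>v ?n $ r"
      proof (cases "r = 0")
        case True then show ?thesis using x0 by simp
      next
        case False then show ?thesis using comp[OF r] x0 r by simp
      qed
    qed (use x in simp)
    then show False using x(2) by simp
  qed
  then show ?thesis using gc ge GL_carrier by blast
qed

definition commS :: "'a::field mat set \<Rightarrow> ('a mat \<times> 'a mat) set" where
  "commS S = {(A,B). A \<in> S \<and> B \<in> S \<and> A * B = B * A}"

lemma finite_carrier_mat[simp]: "finite (carrier_mat nr nc :: 'a::finite mat set)"
proof -
  let ?f = "\<lambda>M::'a mat. (\<lambda>ij\<in>{0..<nr}\<times>{0..<nc}. M $$ ij)"
  have "inj_on ?f (carrier_mat nr nc)"
  proof (rule inj_onI)
    fix M N :: "'a mat" assume M: "M \<in> carrier_mat nr nc" and N: "N \<in> carrier_mat nr nc" and eq: "?f M = ?f N"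
    show "M = N"
    proof (rule eq_matI)
      fix i j assume "i < dim_row N" "j < dim_col N"
      then have ij: "(i,j) \<in> {0..<nr}\<times>{0..<nc}" using N by auto
      show "M $$ (i,j) = N $$ (i,j)" using fun_cong[OF eq, of "(i,j)"] ij by simp
    qed (use M N in auto)
  qed
  moreover have "?f ` carrier_mat nr nc \<subseteq> PiE ({0..<nr}\<times>{0..<nc}) (\<lambda>_. UNIV)"
    by (intro image_subsetI) (simp only: restrict_PiE_iff UNIV_I ball_simps Ball_def, blast)
  moreover have "finite (PiE ({0..<nr}\<times>{0..<nc}) (\<lambda>_. UNIV :: 'a set))" by (intro finite_PiE) auto
  ultimately show ?thesis using finite_imageD finite_subset by metis
qed

lemma finite_GL[simp]: "finite (carrier (GL_group n) :: 'a::{finite,field} mat set)"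
  unfolding GL_carrier by simp

lemma GL_e_nonzero:
  fixes g :: "'a::field mat"
  assumes g: "g \<in> carrier (GL_group n)" and e: "e \<in> carrier_vec n" "e \<noteq> 0\<^sub>v n"
  shows "g *\<^sub>v e \<noteq> 0\<^sub>v n"
  using g e det_0_iff_vec_prod_zero_field[of g n] unfolding GL_carrier by auto

lemma conj_maps:
  fixes g h :: "'a::{finite,field} mat"
  assumes g: "g \<in> carrier_mat n n" and h: "h \<in> carrier_mat n n" and gh: "g * h = 1\<^sub>m n" and hg: "h * g = 1\<^sub>m n"
    and e: "e \<in> carrier_vec n" and y: "y = g *\<^sub>v e"
  shows "card (commS (Stab n y)) \<le> card (commS (Stab n e))"
proof -
  let ?psi = "\<lambda>B. h * B * g"
  have dh: "det h \<noteq> 0" and dg: "det g \<noteq> 0" using det_mult[OF h g] det_mult[OF g h] hg by auto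
  have yc: "y \<in> carrier_vec n" using y g e by simp
  have hy: "h *\<^sub>v y = e" using y g h e hg by (simp add: assoc_mult_mat_vec[symmetric, of h n n g n e])
  have psiS: "?psi B \<in> Stab n e" if B: "B \<in> Stab n y" for B
  proof -
    have Bc: "B \<in> carrier_mat n n" "det B \<noteq> 0" "B *\<^sub>v y = y" using B Stab_iff by auto
    have "det (?psi B) \<noteq> 0" using Bc dh dg g h by (simp add: det_mult[of _ n])
    moreover have "?psi B *\<^sub>v e = e"
    proof -
      have "?psi B *\<^sub>v e = (h * B) *\<^sub>v (g *\<^sub>v e)"
        by (rule assoc_mult_mat_vec[of _ n n _ n]) (use Bc g h e in auto)
      also have "\<dots> = h *\<^sub>v (B *\<^sub>v (g *\<^sub>v e))"
        by (rule assoc_mult_mat_vec[of _ n n _ n]) (use Bc g h e in auto)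
      also have "\<dots> = e" using Bc(3) y hy by simp
      finally show ?thesis .
    qed
    ultimately show ?thesis unfolding Stab_iff using Bc g h by simp
  qed
  have cancel1: "g * (h * X) = X" if "dim_row X = n" for X
  proof -
    have Xc: "X \<in> carrier_mat n (dim_col X)" using that by (intro carrier_matI) auto
    have "g * (h * X) = (g * h) * X" by (rule assoc_mult_mat[symmetric, OF g h Xc])
    then show ?thesis using gh Xc by simp
  qed
  have cancel2: "h * (g * X) = X" if "dim_row X = n" for X
  proof -
    have Xc: "X \<in> carrier_mat n (dim_col X)" using that by (intro carrier_matI) auto
    have "h * (g * X) = (h * g) * X" by (rule assoc_mult_mat[symmetric, OF h g Xc])
    then show ?thesis using hg Xc by simp
  qed
  have psimult: "?psi B * ?psi C = ?psi (B * C)" if "B \<in> carrier_mat n n" "C \<in> carrier_mat n n" for B C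
  proof -
    show ?thesis using that g h by (simp add: assoc_mult_mat[of _ n n _ n _ n] cancel1 gh hg)
  qed
  have psiinj: "B = C" if "B \<in> carrier_mat n n" "C \<in> carrier_mat n n" "?psi B = ?psi C" for B C
  proof -
    have "B = g * ?psi B * h" using that(1) g h by (simp add: assoc_mult_mat[of _ n n _ n _ n] cancel1 gh hg)
    also have "\<dots> = g * ?psi C * h" using that(3) by simp
    also have "\<dots> = C" using that(2) g h by (simp add: assoc_mult_mat[of _ n n _ n _ n] cancel1 gh hg)
    finally show ?thesis .
  qed
  let ?Psi = "\<lambda>(B,C). (?psi B, ?psi C)"
  have "inj_on ?Psi (commS (Stab n y))"
  proof (rule inj_onI)
    fix p q assume p: "p \<in> commS (Stab n y)" and q: "q \<in> commS (Stab n y)" and eq: "?Psi p = ?Psi q"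
    obtain B C where pBC: "p = (B,C)" by (cases p)
    obtain B' C' where qBC: "q = (B',C')" by (cases q)
    have c: "B \<in> carrier_mat n n" "C \<in> carrier_mat n n" "B' \<in> carrier_mat n n" "C' \<in> carrier_mat n n"
      using p q pBC qBC unfolding commS_def Stab_iff by auto
    show "p = q" using eq psiinj c unfolding pBC qBC by auto
  qed
  moreover have "?Psi ` commS (Stab n y) \<subseteq> commS (Stab n e)"
  proof
    fix z assume "z \<in> ?Psi ` commS (Stab n y)"
    then obtain B C where BC: "(B,C) \<in> commS (Stab n y)" and z: "z = (?psi B, ?psi C)" by auto
    have c: "B \<in> carrier_mat n n" "C \<in> carrier_mat n n" "B \<in> Stab n y" "C \<in> Stab n y" "B * C = C * B"
      using BC unfolding commS_def Stab_iff by auto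
    show "z \<in> commS (Stab n e)" unfolding z commS_def using psiS[OF c(3)] psiS[OF c(4)] psimult c by auto
  qed
  moreover have "finite (commS (Stab n e))"
    by (rule finite_subset[of _ "carrier_mat n n \<times> carrier_mat n n"]) (auto simp: commS_def Stab_iff)
  ultimately show ?thesis by (intro card_inj_on_le) auto
qed

lemma GL_mat: "A \<in> carrier (GL_group n) \<Longrightarrow> A \<in> carrier_mat n n"
  unfolding GL_carrier by auto

lemma exists_conj:
  fixes y :: "'a::field vec"
  assumes y: "y \<in> carrier_vec (Suc m)" and yne: "y \<noteq> 0\<^sub>v (Suc m)"
  obtains g h where "g \<in> carrier (GL_group (Suc m))" "h \<in> carrier (GL_group (Suc m))"
    "g * h = 1\<^sub>m (Suc m)" "h * g = 1\<^sub>m (Suc m)" "g *\<^sub>v unit_vec (Suc m) 0 = y" "h *\<^sub>v y = unit_vec (Suc m) 0"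
proof -
  let ?e = "unit_vec (Suc m) 0 :: 'a vec"
  obtain g where g: "g \<in> carrier (GL_group (Suc m))" "g *\<^sub>v ?e = y" using transitive[OF y yne] by blast
  obtain h where h: "h \<in> carrier (GL_group (Suc m))" "g * h = 1\<^sub>m (Suc m)" "h * g = 1\<^sub>m (Suc m)"
    using GL_inverse[OF g(1)] by blast
  have gc: "g \<in> carrier_mat (Suc m) (Suc m)" and hc: "h \<in> carrier_mat (Suc m) (Suc m)" using g h GL_mat by auto
  have "h *\<^sub>v y = (h * g) *\<^sub>v ?e" using g(2) gc hc by (simp add: assoc_mult_mat_vec[of _ "Suc m" "Suc m" _ "Suc m"])
  also have "\<dots> = ?e" using h(3) by simp
  finally show ?thesis using that g h by blast
qed

lemma comm_eq:
  fixes y :: "'a::{finite,field} vec"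
  assumes y: "y \<in> carrier_vec (Suc m)" and yne: "y \<noteq> 0\<^sub>v (Suc m)"
  shows "card (commS (Stab (Suc m) y)) = card (commS (Stab (Suc m) (unit_vec (Suc m) 0 :: 'a vec)))"
proof -
  obtain g h where gh: "g \<in> carrier (GL_group (Suc m))" "h \<in> carrier (GL_group (Suc m))"
    "g * h = 1\<^sub>m (Suc m)" "h * g = 1\<^sub>m (Suc m)" "g *\<^sub>v unit_vec (Suc m) 0 = y" "h *\<^sub>v y = unit_vec (Suc m) 0"
    using exists_conj[OF y yne] by blast
  have gc: "g \<in> carrier_mat (Suc m) (Suc m)" and hc: "h \<in> carrier_mat (Suc m) (Suc m)" using gh GL_mat by auto
  show ?thesis
    using conj_maps[OF gc hc gh(3,4) _ gh(5)[symmetric]] conj_maps[OF hc gc gh(4,3) y gh(6)[symmetric]] by simp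
qed

lemma fiber_eq:
  fixes y :: "'a::{finite,field} vec"
  assumes y: "y \<in> carrier_vec (Suc m)" and yne: "y \<noteq> 0\<^sub>v (Suc m)"
  shows "card {A \<in> carrier (GL_group (Suc m)). A *\<^sub>v unit_vec (Suc m) 0 = y} = card (Stab (Suc m) (unit_vec (Suc m) 0 :: 'a vec))"
proof -
  let ?n = "Suc m"
  let ?e = "unit_vec (Suc m) 0 :: 'a vec"
  let ?F = "{A \<in> carrier (GL_group ?n). A *\<^sub>v ?e = y}"
  obtain g h where gh: "g \<in> carrier (GL_group ?n)" "h \<in> carrier (GL_group ?n)"
    "g * h = 1\<^sub>m ?n" "h * g = 1\<^sub>m ?n" "g *\<^sub>v ?e = y" "h *\<^sub>v y = ?e"
    using exists_conj[OF y yne] by blast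
  have gc: "g \<in> carrier_mat ?n ?n" and hc: "h \<in> carrier_mat ?n ?n" using gh GL_mat by auto
  have fin1: "finite ?F" by simp
  have fin2: "finite (Stab ?n ?e)" unfolding Stab_def by simp
  have GLmult: "A * B \<in> carrier (GL_group ?n)" if "A \<in> carrier (GL_group ?n)" "B \<in> carrier (GL_group ?n)" for A B
    using that unfolding GL_carrier by (auto simp: det_mult[of _ ?n])
  have c1: "h * (g * A) = A" if "A \<in> carrier_mat ?n ?n" for A
  proof -
    have "h * (g * A) = (h * g) * A" by (rule assoc_mult_mat[symmetric, OF hc gc that])
    then show ?thesis using gh(4) that by simp
  qed
  have c2: "g * (h * A) = A" if "A \<in> carrier_mat ?n ?n" for A
  proof -
    have "g * (h * A) = (g * h) * A" by (rule assoc_mult_mat[symmetric, OF gc hc that])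
    then show ?thesis using gh(3) that by simp
  qed
  have "card (Stab ?n ?e) \<le> card ?F"
  proof (rule card_inj_on_le[OF _ _ fin1])
    show "inj_on (\<lambda>A. g * A) (Stab ?n ?e)"
      by (rule inj_onI) (metis c1 Stab_iff)
    show "(\<lambda>A. g * A) ` Stab ?n ?e \<subseteq> ?F"
    proof
      fix B assume "B \<in> (\<lambda>A. g * A) ` Stab ?n ?e"
      then obtain A where A: "A \<in> Stab ?n ?e" and B: "B = g * A" by blast
      have Ac: "A \<in> carrier_mat ?n ?n" "A *\<^sub>v ?e = ?e" "A \<in> carrier (GL_group ?n)" using A unfolding Stab_def by (auto simp: GL_mat)
      have "B *\<^sub>v ?e = g *\<^sub>v (A *\<^sub>v ?e)" unfolding B by (rule assoc_mult_mat_vec[OF gc Ac(1)]) simp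
      then show "B \<in> ?F" using Ac gh GLmult B by simp
    qed
  qed
  moreover have "card ?F \<le> card (Stab ?n ?e)"
  proof (rule card_inj_on_le[OF _ _ fin2])
    show "inj_on (\<lambda>A. h * A) ?F"
      by (rule inj_onI) (metis (no_types, lifting) c2 GL_mat mem_Collect_eq)
    show "(\<lambda>A. h * A) ` ?F \<subseteq> Stab ?n ?e"
    proof
      fix B assume "B \<in> (\<lambda>A. h * A) ` ?F"
      then obtain A where A: "A \<in> ?F" and B: "B = h * A" by blast
      have Ac: "A \<in> carrier_mat ?n ?n" "A *\<^sub>v ?e = y" "A \<in> carrier (GL_group ?n)" using A by (auto simp: GL_mat)
      have "B *\<^sub>v ?e = h *\<^sub>v (A *\<^sub>v ?e)" unfolding B by (rule assoc_mult_mat_vec[OF hc Ac(1)]) simp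
      then show "B \<in> Stab ?n ?e" unfolding Stab_def using Ac gh GLmult B by simp
    qed
  qed
  ultimately show ?thesis by simp
qed

lemma mult_zero_vec_mat: "A \<in> carrier_mat n n \<Longrightarrow> A *\<^sub>v 0\<^sub>v n = (0\<^sub>v n :: 'a::field vec)"
  by (intro eq_vecI) auto

lemma card_GL:
  "card (carrier (GL_group (Suc m)) :: 'a::{finite,field} mat set)
   = (card (UNIV::'a set) ^ Suc m - 1) * card (Stab (Suc m) (unit_vec (Suc m) 0 :: 'a vec))"
proof -
  let ?n = "Suc m"
  let ?e = "unit_vec (Suc m) 0 :: 'a vec"
  let ?V = "carrier_vec ?n :: 'a vec set"
  let ?G = "carrier (GL_group ?n) :: 'a mat set"
  have "card ?G = (\<Sum>y\<in>?V. card {A \<in> ?G. A *\<^sub>v ?e = y})"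
    by (rule card_fibers) (auto intro: mv_carrier GL_mat)
  also have "\<dots> = card {A \<in> ?G. A *\<^sub>v ?e = 0\<^sub>v ?n} + (\<Sum>y\<in>?V - {0\<^sub>v ?n}. card {A \<in> ?G. A *\<^sub>v ?e = y})"
    by (rule sum.remove) auto
  also have "{A \<in> ?G. A *\<^sub>v ?e = 0\<^sub>v ?n} = {}"
    using GL_e_nonzero[of _ ?n ?e] by auto
  also have "(\<Sum>y\<in>?V - {0\<^sub>v ?n}. card {A \<in> ?G. A *\<^sub>v ?e = y}) = (\<Sum>y\<in>?V - {0\<^sub>v ?n}. card (Stab ?n ?e))"
    by (rule sum.cong[OF refl]) (rule fiber_eq, auto)
  also have "\<dots> = card (?V - {0\<^sub>v ?n}) * card (Stab ?n ?e)" by simp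
  also have "card (?V - {0\<^sub>v ?n}) = card (UNIV::'a set) ^ ?n - 1"
    by (simp add: card_Diff_singleton card_carrier_vec)
  finally show ?thesis by simp
qed

lemma Stab_zero: "Stab n (0\<^sub>v n) = (carrier (GL_group n) :: 'a::field mat set)"
  unfolding Stab_def using mult_zero_vec_mat GL_mat by blast

lemma sum_comm:
  "(\<Sum>y\<in>carrier_vec (Suc m). card (commS (Stab (Suc m) (y :: 'a::{finite,field} vec))))
   = card (commS (carrier (GL_group (Suc m)) :: 'a::{finite,field} mat set))
     + (card (UNIV::'a set) ^ Suc m - 1) * card (commS (Stab (Suc m) (unit_vec (Suc m) 0 :: 'a vec)))"
proof -
  let ?n = "Suc m"
  let ?e = "unit_vec (Suc m) 0 :: 'a vec"
  let ?V = "carrier_vec ?n :: 'a vec set"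
  have "(\<Sum>y\<in>?V. card (commS (Stab ?n y))) = card (commS (Stab ?n (0\<^sub>v ?n :: 'a vec))) + (\<Sum>y\<in>?V - {0\<^sub>v ?n}. card (commS (Stab ?n y)))"
    by (rule sum.remove) auto
  also have "(\<Sum>y\<in>?V - {0\<^sub>v ?n}. card (commS (Stab ?n y))) = (\<Sum>y\<in>?V - {0\<^sub>v ?n}. card (commS (Stab ?n ?e)))"
    by (rule sum.cong[OF refl]) (rule comm_eq, auto)
  also have "\<dots> = card (?V - {0\<^sub>v ?n}) * card (commS (Stab ?n ?e))" by simp
  also have "card (?V - {0\<^sub>v ?n}) = card (UNIV::'a set) ^ ?n - 1"
    by (simp add: card_Diff_singleton card_carrier_vec)
  finally show ?thesis by (simp add: Stab_zero)
qed

lemma double_count: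
  "(\<Sum>p\<in>commS (carrier (GL_group n) :: 'a::{finite,field} mat set). card {y \<in> carrier_vec n. fst p *\<^sub>v y = y \<and> snd p *\<^sub>v y = y})
   = (\<Sum>y\<in>carrier_vec n. card (commS (Stab n (y :: 'a vec))))"
proof -
  let ?G = "carrier (GL_group n) :: 'a mat set"
  let ?V = "carrier_vec n :: 'a vec set"
  have finC: "finite (commS ?G)"
    by (rule finite_subset[of _ "?G \<times> ?G"]) (auto simp: commS_def)
  define T where "T = Sigma (commS ?G) (\<lambda>p. {y \<in> ?V. fst p *\<^sub>v y = y \<and> snd p *\<^sub>v y = y})"
  define T' where "T' = Sigma ?V (\<lambda>y. commS (Stab n y))"
  have S1: "(\<Sum>p\<in>commS ?G. card {y \<in> ?V. fst p *\<^sub>v y = y \<and> snd p *\<^sub>v y = y}) = card T"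
    unfolding T_def by (rule card_SigmaI[symmetric]) (use finC in auto)
  have TT: "T' = (\<lambda>(p,y). (y,p)) ` T"
    unfolding T_def T'_def commS_def Stab_def by auto
  have inj: "inj_on (\<lambda>(p,y). (y,p)) T" by (auto intro: inj_onI)
  have S2: "card T' = card T" unfolding TT by (rule card_image[OF inj])
  have S3: "card T' = (\<Sum>y\<in>?V. card (commS (Stab n y)))"
    unfolding T'_def
  proof (rule card_SigmaI)
    show "\<forall>y\<in>?V. finite (commS (Stab n y))"
      by (intro ballI finite_subset[OF _ finC]) (auto simp: commS_def Stab_def)
  qed simp
  show ?thesis using S1 S2 S3 by simp
qed

definition rm :: "nat \<Rightarrow> 'a vec \<Rightarrow> 'a mat" where
  "rm n x = mat 1 n (\<lambda>(i,j). x $ j)"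

lemma rm_carrier[simp]: "rm n x \<in> carrier_mat 1 n"
  unfolding rm_def by simp

lemma rm_carrier'[simp]: "rm n x \<in> carrier_mat (Suc 0) n"
  unfolding rm_def by simp

lemma dim_rm[simp]: "dim_row (rm n x) = 1" "dim_col (rm n x) = n"
  unfolding rm_def by simp_all

lemma rm_index[simp]: "j < n \<Longrightarrow> rm n x $$ (0,j) = x $ j"
  unfolding rm_def by simp

lemma row_rm: "x \<in> carrier_vec n \<Longrightarrow> row (rm n x) 0 = x"
  by (intro eq_vecI) (auto simp: rm_def)

lemma rm_inj: "inj_on (rm n) (carrier_vec n)"
proof (rule inj_onI)
  fix x y assume "x \<in> carrier_vec n" "y \<in> carrier_vec n" "rm n x = rm n y"
  then show "x = y" using row_rm by metis
qed

lemma carrier_mat_rm: "carrier_mat 1 n = rm n ` carrier_vec n"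
proof (intro equalityI subsetI)
  fix u :: "'a mat" assume u: "u \<in> carrier_mat 1 n"
  have "u = rm n (row u 0)"
    by (rule eq_matI) (use u in \<open>auto simp: rm_def\<close>)
  moreover have "row u 0 \<in> carrier_vec n" using u by auto
  ultimately show "u \<in> rm n ` carrier_vec n" by blast
qed (auto simp: rm_def)

lemma card_carrier_mat_row: "card (carrier_mat 1 n :: 'a::finite mat set) = card (UNIV::'a set) ^ n"
  unfolding carrier_mat_rm by (simp add: card_image[OF rm_inj] card_carrier_vec)

lemma mat1_eq_iff:
  assumes "M \<in> carrier_mat 1 n" "N \<in> carrier_mat 1 n"
  shows "M = N \<longleftrightarrow> (\<forall>j<n. M $$ (0,j) = N $$ (0,j))"
proof
  assume "\<forall>j<n. M $$ (0,j) = N $$ (0,j)"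
  then show "M = N" using assms by (intro eq_matI) auto
qed simp

lemma vec_eq_iff_n:
  assumes "a \<in> carrier_vec n" "b \<in> carrier_vec n"
  shows "a = b \<longleftrightarrow> (\<forall>j<n. a $ j = b $ j)"
proof
  assume "\<forall>j<n. a $ j = b $ j"
  then show "a = b" using assms by (intro eq_vecI) auto
qed simp

lemma transl_equiv:
  fixes A B :: "'a::field mat"
  assumes x: "x \<in> carrier_vec n" and y: "y \<in> carrier_vec n" and A: "A \<in> carrier_mat n n" and B: "B \<in> carrier_mat n n"
  shows "(rm n y + rm n x * B = rm n x + rm n y * A) \<longleftrightarrow>
         (transpose_mat (B - 1\<^sub>m n) *\<^sub>v x = transpose_mat (A - 1\<^sub>m n) *\<^sub>v y)"
proof -
  have L: "(rm n y + rm n x * B = rm n x + rm n y * A) \<longleftrightarrow> (\<forall>j<n. y $ j + x \<bullet> col B j = x $ j + y \<bullet> col A j)"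
  proof -
    have "(rm n y + rm n x * B = rm n x + rm n y * A) \<longleftrightarrow> (\<forall>j<n. (rm n y + rm n x * B) $$ (0,j) = (rm n x + rm n y * A) $$ (0,j))"
    proof (rule mat1_eq_iff)
      have "rm n x * B \<in> carrier_mat 1 n" "rm n y * A \<in> carrier_mat 1 n"
        by (rule mult_carrier_mat[OF rm_carrier B], rule mult_carrier_mat[OF rm_carrier A])
      then show "rm n y + rm n x * B \<in> carrier_mat 1 n" "rm n x + rm n y * A \<in> carrier_mat 1 n"
        by auto
    qed
    also have "\<dots> \<longleftrightarrow> (\<forall>j<n. y $ j + x \<bullet> col B j = x $ j + y \<bullet> col A j)"
    proof -
      have "(rm n y + rm n x * B) $$ (0,j) = y $ j + x \<bullet> col B j"
        "(rm n x + rm n y * A) $$ (0,j) = x $ j + y \<bullet> col A j" if j: "j < n" for j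
        using A B x y j by (simp_all add: row_rm)
      then show ?thesis by simp
    qed
    finally show ?thesis .
  qed
  have T: "transpose_mat (C - 1\<^sub>m n) *\<^sub>v z = transpose_mat C *\<^sub>v z - z" if C: "C \<in> carrier_mat n n" and z: "z \<in> carrier_vec n" for C :: "'a mat" and z
  proof -
    have "transpose_mat (C - 1\<^sub>m n) = transpose_mat C - 1\<^sub>m n"
      using transpose_minus[OF C one_carrier_mat] by simp
    then show ?thesis using C z by (simp add: minus_mult_distrib_mat_vec[of _ n n])
  qed
  have Tj: "(transpose_mat (C - 1\<^sub>m n) *\<^sub>v z) $ j = z \<bullet> col C j - z $ j" if C: "C \<in> carrier_mat n n" and z: "z \<in> carrier_vec n" and j: "j < n" for C :: "'a mat" and z j
    unfolding T[OF C z] using C z j comm_scalar_prod[of "col C j" n z] by simp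
  have R: "(transpose_mat (B - 1\<^sub>m n) *\<^sub>v x = transpose_mat (A - 1\<^sub>m n) *\<^sub>v y) \<longleftrightarrow>
      (\<forall>j<n. x \<bullet> col B j - x $ j = y \<bullet> col A j - y $ j)"
  proof -
    have "(transpose_mat (B - 1\<^sub>m n) *\<^sub>v x = transpose_mat (A - 1\<^sub>m n) *\<^sub>v y) \<longleftrightarrow>
      (\<forall>j<n. (transpose_mat (B - 1\<^sub>m n) *\<^sub>v x) $ j = (transpose_mat (A - 1\<^sub>m n) *\<^sub>v y) $ j)"
      by (rule vec_eq_iff_n) (use A B x y in \<open>auto intro!: mv_carrier\<close>)
    also have "\<dots> \<longleftrightarrow> (\<forall>j<n. x \<bullet> col B j - x $ j = y \<bullet> col A j - y $ j)"
      using Tj[OF B x] Tj[OF A y] by simp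
    finally show ?thesis .
  qed
  have "(y $ j + x \<bullet> col B j = x $ j + y \<bullet> col A j) \<longleftrightarrow> (x \<bullet> col B j - x $ j = y \<bullet> col A j - y $ j)" for j
    by (auto simp: algebra_simps)
  then show ?thesis unfolding L R by simp
qed

definition Cpair :: "nat \<Rightarrow> 'a::field mat \<Rightarrow> 'a mat \<Rightarrow> ('a mat \<times> 'a mat) set" where
  "Cpair n A B = {(u,v). u \<in> carrier_mat 1 n \<and> v \<in> carrier_mat 1 n \<and> v + u * B = u + v * A}"

lemma inner_count:
  fixes A B :: "'a::{finite,field} mat"
  assumes A: "A \<in> carrier_mat n n" and B: "B \<in> carrier_mat n n"
  shows "card (Cpair n A B) = card (UNIV::'a set) ^ n * card {y \<in> carrier_vec n. A *\<^sub>v y = y \<and> B *\<^sub>v y = y}"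
proof -
  let ?V = "carrier_vec n :: 'a vec set"
  let ?X = "{(x,y). x \<in> ?V \<and> y \<in> ?V \<and> transpose_mat (B - 1\<^sub>m n) *\<^sub>v x = transpose_mat (A - 1\<^sub>m n) *\<^sub>v y}"
  let ?F = "\<lambda>(x,y). (rm n x, rm n y)"
  have img: "Cpair n A B = ?F ` ?X"
  proof (intro equalityI subsetI)
    fix p assume p: "p \<in> Cpair n A B"
    then obtain u v where pu: "p = (u,v)" and u: "u \<in> carrier_mat 1 n" and v: "v \<in> carrier_mat 1 n"
      and eq: "v + u * B = u + v * A" unfolding Cpair_def by auto
    obtain x where x: "x \<in> ?V" "u = rm n x" using u carrier_mat_rm by blast
    obtain y where y: "y \<in> ?V" "v = rm n y" using v carrier_mat_rm by blast
    have "(x,y) \<in> ?X" using transl_equiv[OF x(1) y(1) A B] eq x y by simp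
    then show "p \<in> ?F ` ?X" using pu x y by force
  next
    fix p assume "p \<in> ?F ` ?X"
    then obtain x y where xy: "(x,y) \<in> ?X" and p: "p = (rm n x, rm n y)" by auto
    then have x: "x \<in> ?V" and y: "y \<in> ?V" by auto
    show "p \<in> Cpair n A B" unfolding Cpair_def p using transl_equiv[OF x y A B] xy by simp
  qed
  have inj: "inj_on ?F ?X"
  proof (rule inj_onI)
    fix p q assume "p \<in> ?X" "q \<in> ?X" "?F p = ?F q"
    then show "p = q" using rm_inj[of n] unfolding inj_on_def by auto
  qed
  have "card (Cpair n A B) = card ?X" unfolding img by (rule card_image[OF inj])
  also have "\<dots> = card (UNIV::'a set) ^ n * card {y \<in> ?V. (B - 1\<^sub>m n) *\<^sub>v y = 0\<^sub>v n \<and> (A - 1\<^sub>m n) *\<^sub>v y = 0\<^sub>v n}"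
    by (rule key) (use A B in auto)
  also have "{y \<in> ?V. (B - 1\<^sub>m n) *\<^sub>v y = 0\<^sub>v n \<and> (A - 1\<^sub>m n) *\<^sub>v y = 0\<^sub>v n} = {y \<in> ?V. A *\<^sub>v y = y \<and> B *\<^sub>v y = y}"
  proof -
    have "((C - 1\<^sub>m n) *\<^sub>v y = 0\<^sub>v n) = (C *\<^sub>v y = y)" if C: "C \<in> carrier_mat n n" and y: "y \<in> ?V" for C :: "'a mat" and y
    proof -
      have "(C - 1\<^sub>m n) *\<^sub>v y = C *\<^sub>v y - y" using C y by (simp add: minus_mult_distrib_mat_vec[of _ n n])
      then show ?thesis using vec_minus_eq_0_iff[OF mv_carrier[OF C] y] by simp
    qed
    then show ?thesis using A B by blast
  qed
  finally show ?thesis .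
qed

lemma card_AGL:
  "card (carrier (AGL_group n) :: 'a::{finite,field} mat set) = card (UNIV::'a set) ^ n * card (carrier (GL_group n) :: 'a mat set)"
proof -
  let ?G = "carrier (GL_group n) :: 'a mat set"
  let ?F = "\<lambda>(u,A). fbm n u A"
  have img: "carrier (AGL_group n) = ?F ` (carrier_mat 1 n \<times> ?G)"
    unfolding AGL_carrier_fbm by auto
  have inj: "inj_on ?F (carrier_mat 1 n \<times> ?G)"
  proof (rule inj_onI)
    fix p q assume p: "p \<in> carrier_mat 1 n \<times> ?G" and q: "q \<in> carrier_mat 1 n \<times> ?G" and eq: "?F p = ?F q"
    obtain u A where pu: "p = (u,A)" by (cases p)
    obtain v B where qv: "q = (v,B)" by (cases q)
    show "p = q" using fbm_inj[of u n v A B] p q eq GL_mat unfolding pu qv by auto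
  qed
  show ?thesis unfolding img card_image[OF inj] card_cartesian_product card_carrier_mat_row ..
qed

lemma comm_AGL:
  "card {(x,y). x \<in> carrier (AGL_group n) \<and> y \<in> carrier (AGL_group n) \<and> x * y = y * (x :: 'a::{finite,field} mat)}
   = (\<Sum>p\<in>commS (carrier (GL_group n) :: 'a mat set). card (Cpair n (fst p) (snd p)))"
proof -
  let ?X = "{(x,y). x \<in> carrier (AGL_group n) \<and> y \<in> carrier (AGL_group n) \<and> x * y = y * (x :: 'a mat)}"
  let ?G = "carrier (GL_group n) :: 'a mat set"
  let ?S = "Sigma (commS ?G) (\<lambda>p. Cpair n (fst p) (snd p))"
  let ?F = "\<lambda>(p,(u,v)). (fbm n u (fst p), fbm n v (snd p))"
  have finC: "finite (commS ?G)"
    by (rule finite_subset[of _ "?G \<times> ?G"]) (auto simp: commS_def)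
  have img: "?X = ?F ` ?S"
  proof (intro equalityI subsetI)
    fix z assume z: "z \<in> ?X"
    then obtain x y where zxy: "z = (x,y)" and x: "x \<in> carrier (AGL_group n)" and y: "y \<in> carrier (AGL_group n)" and c: "x * y = y * x"
      by auto
    obtain u A where xu: "x = fbm n u A" and u: "u \<in> carrier_mat 1 n" and A: "A \<in> ?G"
      using x unfolding AGL_carrier_fbm by blast
    obtain v B where yv: "y = fbm n v B" and v: "v \<in> carrier_mat 1 n" and B: "B \<in> ?G"
      using y unfolding AGL_carrier_fbm by blast
    have Ac: "A \<in> carrier_mat n n" and Bc: "B \<in> carrier_mat n n" using A B GL_mat by auto
    have "fbm n (v + u * B) (A * B) = fbm n (u + v * A) (B * A)"
      using c unfolding xu yv fbm_mult[OF u v Ac Bc] fbm_mult[OF v u Bc Ac] .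
    moreover have "v + u * B \<in> carrier_mat 1 n" "u + v * A \<in> carrier_mat 1 n"
      using u v Ac Bc by (auto intro: mult_carrier_mat[of _ 1 n])
    ultimately have eqs: "v + u * B = u + v * A" "A * B = B * A"
      using fbm_inj[of "v + u * B" n "u + v * A" "A * B" "B * A"] Ac Bc by auto
    have "((A,B),(u,v)) \<in> ?S" using A B eqs u v unfolding commS_def Cpair_def by auto
    moreover have "z = ?F ((A,B),(u,v))" using zxy xu yv by simp
    ultimately show "z \<in> ?F ` ?S" by blast
  next
    fix z assume "z \<in> ?F ` ?S"
    then obtain A B u v where s: "((A,B),(u,v)) \<in> ?S" and z: "z = (fbm n u A, fbm n v B)" by auto
    then have A: "A \<in> ?G" and B: "B \<in> ?G" and AB: "A * B = B * A" and u: "u \<in> carrier_mat 1 n" and v: "v \<in> carrier_mat 1 n"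
      and e: "v + u * B = u + v * A"
      unfolding commS_def Cpair_def by auto
    have Ac: "A \<in> carrier_mat n n" and Bc: "B \<in> carrier_mat n n" using A B GL_mat by auto
    have "fbm n u A * fbm n v B = fbm n v B * fbm n u A"
      unfolding fbm_mult[OF u v Ac Bc] fbm_mult[OF v u Bc Ac] using e AB by simp
    moreover have "fbm n u A \<in> carrier (AGL_group n)" "fbm n v B \<in> carrier (AGL_group n)"
      unfolding AGL_carrier_fbm using u v A B by blast+
    ultimately show "z \<in> ?X"
      using z by simp
  qed
  have inj: "inj_on ?F ?S"
  proof (rule inj_onI)
    fix p q assume p: "p \<in> ?S" and q: "q \<in> ?S" and eq: "?F p = ?F q"
    obtain A B u v where pA: "p = ((A,B),(u,v))" by (metis prod.collapse)
    obtain A' B' u' v' where qA: "q = ((A',B'),(u',v'))" by (metis prod.collapse)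
    have c: "A \<in> carrier_mat n n" "B \<in> carrier_mat n n" "A' \<in> carrier_mat n n" "B' \<in> carrier_mat n n"
      "u \<in> carrier_mat 1 n" "v \<in> carrier_mat 1 n" "u' \<in> carrier_mat 1 n" "v' \<in> carrier_mat 1 n"
      using p q unfolding pA qA commS_def Cpair_def by (auto simp: GL_mat)
    have "fbm n u A = fbm n u' A'" "fbm n v B = fbm n v' B'" using eq unfolding pA qA by auto
    then show "p = q" unfolding pA qA using fbm_inj[OF c(5) c(7) c(1) c(3)] fbm_inj[OF c(6) c(8) c(2) c(4)] by auto
  qed
  have "card ?X = card ?S"
    unfolding img by (rule card_image[OF inj])
  also have "\<dots> = (\<Sum>p\<in>commS ?G. card (Cpair n (fst p) (snd p)))"
  proof (rule card_SigmaI[OF finC])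
    show "\<forall>p\<in>commS ?G. finite (Cpair n (fst p) (snd p))"
    proof
      fix p :: "'a mat \<times> 'a mat"
      have f: "finite (carrier_mat 1 n \<times> carrier_mat 1 n :: ('a mat \<times> 'a mat) set)"
        by (intro finite_cartesian_product finite_carrier_mat)
      have "Cpair n (fst p) (snd p) \<subseteq> carrier_mat 1 n \<times> carrier_mat 1 n" unfolding Cpair_def by blast
      then show "finite (Cpair n (fst p) (snd p))" using f by (rule finite_subset)
    qed
  qed
  finally show ?thesis .
qed

lemma card_conj_single:
  assumes "card (carrier G) = 1"
  shows "card (conj_classes G) = 1"
proof -
  obtain x where x: "carrier G = {x}" using assms card_1_singletonE by blast
  show ?thesis unfolding conj_classes_def x by simp
qed

lemma card_GL0: "card (carrier (GL_group 0) :: 'a::field mat set) = 1"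
proof -
  have "carrier (GL_group 0) = {1\<^sub>m 0 :: 'a mat}"
  proof (intro equalityI subsetI)
    fix A :: "'a mat" assume "A \<in> carrier (GL_group 0)"
    then have "A \<in> carrier_mat 0 0" by (rule GL_mat)
    then show "A \<in> {1\<^sub>m 0}" by (auto intro!: eq_matI)
  qed (simp add: GL_carrier)
  then show ?thesis by simp
qed

lemma GL_nonempty: "card (carrier (GL_group n) :: 'a::{finite,field} mat set) > 0"
proof -
  have "1\<^sub>m n \<in> (carrier (GL_group n) :: 'a mat set)" unfolding GL_carrier by simp
  then show ?thesis using finite_GL card_gt_0_iff by blast
qed

lemma class_eq_GL:
  "card (conj_classes (GL_group n :: 'a::{finite,field} mat monoid)) * card (carrier (GL_group n :: 'a mat monoid)) = card (commS (carrier (GL_group n) :: 'a mat set))"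
proof -
  have "card (conj_classes (GL_group n :: 'a mat monoid)) * order (GL_group n :: 'a mat monoid)
    = card {(x,y). x \<in> carrier (GL_group n) \<and> y \<in> carrier (GL_group n) \<and> x \<otimes>\<^bsub>GL_group n\<^esub> y = y \<otimes>\<^bsub>GL_group n\<^esub> (x :: 'a mat)}"
    by (rule class_eq[OF GL_group finite_GL])
  then show ?thesis unfolding order_def commS_def by simp
qed

lemma class_eq_AGL:
  "card (conj_classes (AGL_group n :: 'a::{finite,field} mat monoid)) * card (carrier (AGL_group n :: 'a mat monoid))
   = card {(x,y). x \<in> carrier (AGL_group n) \<and> y \<in> carrier (AGL_group n) \<and> x * y = y * (x :: 'a mat)}"
proof -
  have fin: "finite (carrier (AGL_group n) :: 'a mat set)"
    unfolding AGL_carrier_Stab Stab_def by simp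
  have "card (conj_classes (AGL_group n :: 'a mat monoid)) * order (AGL_group n :: 'a mat monoid)
    = card {(x,y). x \<in> carrier (AGL_group n) \<and> y \<in> carrier (AGL_group n) \<and> x \<otimes>\<^bsub>AGL_group n\<^esub> y = y \<otimes>\<^bsub>AGL_group n\<^esub> (x :: 'a mat)}"
    by (rule class_eq[OF AGL_group fin])
  then show ?thesis unfolding order_def by simp
qed

lemma step:
  "card (conj_classes (AGL_group (Suc m) :: 'a::{finite,field} mat monoid))
   = card (conj_classes (GL_group (Suc m) :: 'a mat monoid)) + card (conj_classes (AGL_group m :: 'a mat monoid))"
proof -
  let ?n = "Suc m"
  let ?q = "card (UNIV :: 'a set)"
  let ?e = "unit_vec ?n 0 :: 'a vec"
  let ?G = "carrier (GL_group ?n) :: 'a mat set"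
  let ?A = "carrier (AGL_group m) :: 'a mat set"
  let ?cA = "card (conj_classes (AGL_group ?n) :: 'a mat set set)"
  let ?cG = "card (conj_classes (GL_group ?n) :: 'a mat set set)"
  let ?cA' = "card (conj_classes (AGL_group m) :: 'a mat set set)"
  have commA': "card (commS ?A) = ?cA' * card ?A"
    using class_eq_AGL[of m, where 'a='a] unfolding commS_def by simp
  have cardG: "card ?G = (?q ^ ?n - 1) * card ?A"
    using card_GL[of m, where 'a='a] unfolding AGL_carrier_Stab .
  have "?cA * (?q ^ ?n * card ?G) = ?cA * card (carrier (AGL_group ?n) :: 'a mat set)"
    by (simp add: card_AGL)
  also have "\<dots> = card {(x,y). x \<in> carrier (AGL_group ?n) \<and> y \<in> carrier (AGL_group ?n) \<and> x * y = y * (x :: 'a mat)}"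
    by (rule class_eq_AGL)
  also have "\<dots> = (\<Sum>p\<in>commS ?G. card (Cpair ?n (fst p) (snd p)))"
    by (rule comm_AGL)
  also have "\<dots> = (\<Sum>p\<in>commS ?G. ?q ^ ?n * card {y \<in> carrier_vec ?n. fst p *\<^sub>v y = y \<and> snd p *\<^sub>v y = y})"
  proof (rule sum.cong[OF refl])
    fix p assume "p \<in> commS ?G"
    then have "fst p \<in> carrier_mat ?n ?n" "snd p \<in> carrier_mat ?n ?n" unfolding commS_def by (auto simp: GL_mat)
    then show "card (Cpair ?n (fst p) (snd p)) = ?q ^ ?n * card {y \<in> carrier_vec ?n. fst p *\<^sub>v y = y \<and> snd p *\<^sub>v y = y}"
      by (rule inner_count)
  qed
  also have "\<dots> = ?q ^ ?n * (\<Sum>p\<in>commS ?G. card {y \<in> carrier_vec ?n. fst p *\<^sub>v y = y \<and> snd p *\<^sub>v y = y})"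
    by (simp add: sum_distrib_left)
  also have "(\<Sum>p\<in>commS ?G. card {y \<in> carrier_vec ?n. fst p *\<^sub>v y = y \<and> snd p *\<^sub>v y = y})
      = (\<Sum>y\<in>carrier_vec ?n. card (commS (Stab ?n (y :: 'a vec))))"
    by (rule double_count)
  also have "\<dots> = card (commS ?G) + (?q ^ ?n - 1) * card (commS (Stab ?n ?e))"
    by (rule sum_comm)
  also have "commS (Stab ?n ?e) = commS ?A" unfolding AGL_carrier_Stab ..
  also have "card (commS ?G) = ?cG * card ?G" using class_eq_GL[of ?n, where 'a='a] by simp
  finally have "?cA * (?q ^ ?n * card ?G) = ?q ^ ?n * (?cG * card ?G + (?q ^ ?n - 1) * (?cA' * card ?A))"
    unfolding commA' .
  also have "\<dots> = (?cG + ?cA') * (?q ^ ?n * card ?G)"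
    unfolding cardG by (simp add: algebra_simps)
  finally have "?cA * (?q ^ ?n * card ?G) = (?cG + ?cA') * (?q ^ ?n * card ?G)" .
  moreover have k: "?q ^ ?n * card ?G \<noteq> 0"
  proof -
    have "card ?G \<noteq> 0" using GL_nonempty[of ?n, where 'a='a] by linarith
    moreover have "?q ^ ?n \<noteq> 0" using card_field_ge2[where 'a='a] by simp
    ultimately show ?thesis by simp
  qed
  ultimately show ?thesis using mult_right_cancel[OF k] by blast
qed

theorem mainTheorem12:
  fixes n :: nat
  shows "card (conj_classes (AGL_group n :: 'a::{finite,field} mat monoid))
         = (\<Sum>j\<le>n. card (conj_classes (GL_group j :: 'a mat monoid)))"
proof (induction n)
  case 0
  have "card (carrier (AGL_group 0) :: 'a mat set) = 1" using card_AGL[of 0, where 'a='a] card_GL0 by simp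
  then have "card (conj_classes (AGL_group 0 :: 'a mat monoid)) = 1" by (rule card_conj_single)
  moreover have "card (conj_classes (GL_group 0 :: 'a mat monoid)) = 1" by (rule card_conj_single[OF card_GL0])
  ultimately show ?case by simp
next
  case (Suc m)
  then show ?case using step[of m, where 'a='a] by simp
qed

end
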